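(* The third order mock theta function $\psi_3(q)=\sum_{n\ge0}\frac{q^{n^2}}{(q;q^2)_n}$ is the generating function $\sum_\pi q^{|\pi|}$ over partitions $\pi$ with $n$ copies of $n$ (including the empty one) in which, with parts in ascending lexicographic order, the weighted difference between each part and the preceding one is exactly $0$, and the smallest part is of the form $j_j$.
   Context: $M=\{m_i: 1\le i\le m\}$; a partition with $n$ copies of $n$ is a finite multiset of elements of $M$, $|\pi|$ the sum of values. Lexicographic order: $m_i>n_j$ iff $m>n$, or $m=n$ and $i>j$. Weighted difference $((m_i-n_j))=m-n-i-j$. $(a;q)_n=\prod_{j=0}^{n-1}(1-aq^j)$. *)

theory Defs
  imports Complex_Main "HOL-Library.Multiset" "HOL-Library.Product_Lexorder"
begin

definition qpoch :: "complex \<Rightarrow> complex \<Rightarrow> nat \<Rightarrow> complex" where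
  "qpoch a q n = (\<Prod>j<n. 1 - a * q ^ j)"

definition psi3 :: "complex \<Rightarrow> complex" where
  "psi3 q = (\<Sum>n. q ^ (n\<^sup>2) / qpoch q (q\<^sup>2) n)"

text \<open>A part m_i of a partition with n copies of n is encoded as the pair (m, i)
  with 1 <= i <= m. The product order from Product_Lexorder is exactly the
  lexicographic order of the paper: (m,i) > (n,j) iff m > n, or m = n and i > j.\<close>
definition is_part :: "nat \<times> nat \<Rightarrow> bool" where
  "is_part p \<longleftrightarrow> 1 \<le> snd p \<and> snd p \<le> fst p"

definition is_ncopy_partition :: "(nat \<times> nat) multiset \<Rightarrow> bool" where
  "is_ncopy_partition \<pi> \<longleftrightarrow> (\<forall>p\<in>#\<pi>. is_part p)"

definition pweight :: "(nat \<times> nat) multiset \<Rightarrow> nat" where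
  "pweight \<pi> = sum_mset (image_mset fst \<pi>)"

definition wdiff :: "nat \<times> nat \<Rightarrow> nat \<times> nat \<Rightarrow> int" where
  "wdiff p r = int (fst p) - int (fst r) - int (snd p) - int (snd r)"

definition psi3_partition :: "(nat \<times> nat) multiset \<Rightarrow> bool" where
  "psi3_partition \<pi> \<longleftrightarrow> is_ncopy_partition \<pi> \<and>
     (let xs = sorted_list_of_multiset \<pi> in
        (\<forall>t. Suc t < length xs \<longrightarrow> wdiff (xs ! Suc t) (xs ! t) = 0) \<and>
        (xs \<noteq> [] \<longrightarrow> fst (hd xs) = snd (hd xs)))"

definition psi3_count :: "nat \<Rightarrow> nat" where
  "psi3_count N = card {\<pi>. psi3_partition \<pi> \<and> pweight \<pi> = N}"

end

theory Submission
  imports Defs "HOL-Analysis.Infinite_Sum" "HOL-Analysis.Elementary_Metric_Spaces"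
begin


definition mm :: "(nat \<Rightarrow> nat) \<Rightarrow> nat \<Rightarrow> nat" where
  "mm i t = 2 * (\<Sum>s<t. i s) + i t"

definition LL :: "nat \<Rightarrow> (nat \<Rightarrow> nat) \<Rightarrow> (nat \<times> nat) list" where
  "LL k i = map (\<lambda>t. (mm i t, i t)) [0..<k]"

definition TT :: "nat \<Rightarrow> (nat \<Rightarrow> nat) set" where
  "TT k = PiE {..<k} (\<lambda>_. {1..})"

definition WW :: "nat \<Rightarrow> (nat \<Rightarrow> nat) \<Rightarrow> nat" where
  "WW k i = (\<Sum>t<k. (2 * (k - 1 - t) + 1) * i t)"

lemma mm_Suc: "mm i (Suc t) = mm i t + i t + i (Suc t)"
  by (simp add: mm_def)

lemma mm_mono_less:
  assumes "t < t'" "i t \<ge> 1" shows "mm i t < mm i t'"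
proof -
  have "(\<Sum>s<Suc t. i s) \<le> (\<Sum>s<t'. i s)"
    using assms by (intro sum_mono2) auto
  thus ?thesis using assms by (simp add: mm_def)
qed

lemma sorted_LL:
  assumes "i \<in> TT k" shows "sorted (LL k i)"
  unfolding sorted_iff_nth_mono_less
proof (intro allI impI)
  fix a b assume "a < b" "b < length (LL k i)"
  then have "i a \<ge> 1" using assms by (auto simp: TT_def LL_def PiE_def Pi_def)
  then have "mm i a < mm i b" using mm_mono_less \<open>a < b\<close> by blast
  thus "LL k i ! a \<le> LL k i ! b" using \<open>a<b\<close> \<open>b < length (LL k i)\<close> by (simp add: LL_def)
qed

lemma sum_mm: "(\<Sum>t<k. mm i t) = WW k i"
proof (induction k)
  case 0 then show ?case by (simp add: WW_def)
next
  case (Suc k)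
  have e: "(2 * (Suc k - 1 - t) + 1) * i t = (2 * (k - 1 - t) + 1) * i t + 2 * i t" if "t < k" for t
  proof -
    have h: "Suc k - 1 - t = Suc (k - 1 - t)" using that by simp
    show ?thesis unfolding h by (simp add: algebra_simps)
  qed
  have "WW (Suc k) i = (\<Sum>t<k. (2 * (Suc k - 1 - t) + 1) * i t) + (2 * (Suc k - 1 - k) + 1) * i k"
    unfolding WW_def by (rule sum.lessThan_Suc)
  also have "(2 * (Suc k - 1 - k) + 1) * i k = i k" by simp
  also have "(\<Sum>t<k. (2 * (Suc k - 1 - t) + 1) * i t) = (\<Sum>t<k. (2 * (k - 1 - t) + 1) * i t + 2 * i t)"
    by (intro sum.cong refl e) simp
  also have "\<dots> = WW k i + 2 * (\<Sum>t<k. i t)"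
    unfolding WW_def by (simp only: sum.distrib sum_distrib_left)
  finally have w: "WW (Suc k) i = WW k i + 2 * (\<Sum>t<k. i t) + i k" .
  have m: "mm i k = 2 * (\<Sum>t<k. i t) + i k" by (rule mm_def)
  have "(\<Sum>t<Suc k. mm i t) = WW k i + mm i k" unfolding sum.lessThan_Suc Suc.IH by (rule refl)
  also have "\<dots> = WW (Suc k) i" unfolding w m by (rule add.assoc[symmetric])
  finally show ?case .
qed


lemma enc_good:
  assumes "i \<in> TT k"
  shows "psi3_partition (mset (LL k i)) \<and> pweight (mset (LL k i)) = WW k i"
proof -
  have srt: "sorted_list_of_multiset (mset (LL k i)) = LL k i"
    using sorted_LL[OF assms] by (simp add: sorted_sort_id)
  have pos: "\<And>t. t < k \<Longrightarrow> i t \<ge> 1" using assms by (auto simp: TT_def PiE_def Pi_def)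
  have "is_ncopy_partition (mset (LL k i))"
    using pos by (auto simp: is_ncopy_partition_def is_part_def LL_def mm_def)
  moreover have "\<forall>t. Suc t < length (LL k i) \<longrightarrow> wdiff (LL k i ! Suc t) (LL k i ! t) = 0"
    by (auto simp: LL_def wdiff_def mm_Suc nth_append simp del: upt_Suc)
  moreover have "LL k i \<noteq> [] \<longrightarrow> fst (hd (LL k i)) = snd (hd (LL k i))"
    by (cases k) (auto simp: LL_def mm_def hd_map upt_conv_Cons simp del: upt_Suc)
  moreover have "pweight (mset (LL k i)) = WW k i"
    unfolding pweight_def LL_def mset_map[symmetric] sum_mset_sum_list map_map
    by (simp add: o_def sum_list_distinct_conv_sum_set atLeast0LessThan flip: sum_mm)
  ultimately show ?thesis using srt by (simp add: psi3_partition_def Let_def)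
qed



lemma LL_inj:
  assumes "i \<in> TT k" "i' \<in> TT k'" "mset (LL k i) = mset (LL k' i')"
  shows "k = k' \<and> i = i'"
proof -
  have "sort (LL k i) = sort (LL k' i')" using assms(3) by (metis sorted_list_of_multiset_mset)
  hence eq: "LL k i = LL k' i'" using sorted_LL[OF assms(1)] sorted_LL[OF assms(2)]
    by (simp add: sorted_sort_id)
  hence kk: "k = k'" by (metis LL_def length_map length_upt minus_nat.diff_0)
  have "i t = i' t" for t
  proof (cases "t < k")
    case True
    then have "LL k i ! t = LL k' i' ! t" using eq by simp
    then show ?thesis using True kk by (simp add: LL_def)
  next
    case False
    then show ?thesis using assms(1,2) kk by (auto simp: TT_def PiE_def extensional_def)
  qed
  thus ?thesis using kk by auto
qed

lemma LL_surj:
  assumes "psi3_partition \<pi>"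
  shows "\<exists>k i. i \<in> TT k \<and> \<pi> = mset (LL k i)"
proof -
  define xs where "xs = sorted_list_of_multiset \<pi>"
  define k where "k = length xs"
  define i where "i = (\<lambda>t. if t < k then snd (xs ! t) else undefined)"
  have parts: "\<And>t. t < k \<Longrightarrow> is_part (xs ! t)"
    using assms unfolding psi3_partition_def is_ncopy_partition_def k_def xs_def
    by (metis nth_mem set_mset_mset mset_sorted_list_of_multiset)
  have wd: "\<And>t. Suc t < k \<Longrightarrow> wdiff (xs ! Suc t) (xs ! t) = 0"
    using assms unfolding psi3_partition_def Let_def k_def xs_def by blast
  have hd: "xs \<noteq> [] \<Longrightarrow> fst (hd xs) = snd (hd xs)"
    using assms unfolding psi3_partition_def Let_def k_def xs_def by blast
  have iT: "i \<in> TT k" using parts by (auto simp: TT_def i_def is_part_def PiE_def extensional_def split: if_splits)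
  have fst: "t < k \<Longrightarrow> fst (xs ! t) = mm i t" for t
  proof (induction t)
    case 0
    then have "xs \<noteq> []" by (auto simp: k_def)
    then show ?case using hd 0 by (simp add: hd_conv_nth mm_def i_def)
  next
    case (Suc t)
    then have "fst (xs ! t) = mm i t" by simp
    moreover have "wdiff (xs ! Suc t) (xs ! t) = 0" using wd Suc by blast
    ultimately show ?case using Suc by (simp add: wdiff_def mm_Suc i_def)
  qed
  have "xs = LL k i"
    by (rule nth_equalityI) (auto simp: LL_def k_def fst i_def intro: prod_eqI)
  hence "\<pi> = mset (LL k i)" by (metis xs_def mset_sorted_list_of_multiset)
  thus ?thesis using iT by blast
qed



lemma has_sum_prod_PiE_nonneg:
  fixes f :: "'a \<Rightarrow> 'b \<Rightarrow> real"
  assumes "finite A" "\<And>x y. x \<in> A \<Longrightarrow> y \<in> B x \<Longrightarrow> f x y \<ge> 0"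
    "\<And>x. x \<in> A \<Longrightarrow> (f x has_sum s x) (B x)"
  shows "((\<lambda>g. \<Prod>x\<in>A. f x (g x)) has_sum (\<Prod>x\<in>A. s x)) (PiE A B)"
  using assms
proof (induction A rule: finite_induct)
  case empty
  then show ?case by (intro has_sum_finiteI) auto
next
  case (insert x F)
  have pi: "Pi\<^sub>E (insert x F) B = (\<lambda>(g,y). g(x:=y)) ` (Pi\<^sub>E F B \<times> B x)"
    unfolding PiE_insert_eq
    by (subst swap_product [symmetric]) (simp add: image_image case_prod_unfold)
  have inj: "inj_on (\<lambda>(g, y). g(x := y)) (Pi\<^sub>E F B \<times> B x)"
    using \<open>x \<notin> F\<close> by (rule inj_combinator')
  have IH: "((\<lambda>g. \<Prod>x\<in>F. f x (g x)) has_sum (\<Prod>x\<in>F. s x)) (PiE F B)"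
    using insert by auto
  have sx: "(f x has_sum s x) (B x)" using insert by auto
  have nnP: "(\<Prod>x'\<in>F. f x' (p x')) \<ge> 0" if "p \<in> PiE F B" for p
    using that insert.prems(1) by (intro prod_nonneg) auto
  have h1: "((\<lambda>y. (\<lambda>(p,y). f x y * (\<Prod>x'\<in>F. f x' (p x'))) (p, y)) has_sum s x * (\<Prod>x'\<in>F. f x' (p x'))) (B x)" if "p \<in> Pi\<^sub>E F B" for p
    using has_sum_cmult_left[OF sx] by simp
  have h2: "((\<lambda>p. s x * (\<Prod>x'\<in>F. f x' (p x'))) has_sum s x * (\<Prod>x\<in>F. s x)) (Pi\<^sub>E F B)"
    using has_sum_cmult_right[OF IH] by simp
  have h2': "(\<lambda>p. s x * (\<Prod>x'\<in>F. f x' (p x'))) summable_on Pi\<^sub>E F B"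
    using h2 by (auto simp: summable_on_def)
  have h3: "(\<lambda>(p,y). f x y * (\<Prod>x'\<in>F. f x' (p x'))) summable_on Sigma (Pi\<^sub>E F B) (\<lambda>_. B x)"
    by (rule summable_on_SigmaI[OF h1 h2']) (use nnP insert.prems(1) in auto)
  have main: "((\<lambda>(p,y). f x y * (\<Prod>x'\<in>F. f x' (p x'))) has_sum (s x * (\<Prod>x\<in>F. s x))) (Pi\<^sub>E F B \<times> B x)"
    using has_sum_SigmaI[where f="\<lambda>(p,y). f x y * (\<Prod>x'\<in>F. f x' (p x'))" and A="Pi\<^sub>E F B" and B="\<lambda>_. B x", OF h1 h2 h3] by simp
  have "((\<lambda>g. \<Prod>x\<in>insert x F. f x (g x)) \<circ> (\<lambda>(g,y). g(x:=y)) has_sum (s x * (\<Prod>x\<in>F. s x))) (Pi\<^sub>E F B \<times> B x)"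
  proof (rule has_sum_cong[THEN iffD1, OF _ main])
    fix py assume "py \<in> Pi\<^sub>E F B \<times> B x"
    obtain p y where py: "py = (p, y)" by force
    have "(\<Prod>z\<in>F. f z ((p(x := y)) z)) = (\<Prod>z\<in>F. f z (p z))"
      using insert.hyps by (intro prod.cong) auto
    then show "(case py of (p, y) \<Rightarrow> f x y * (\<Prod>x'\<in>F. f x' (p x'))) =
      ((\<lambda>g. \<Prod>x\<in>insert x F. f x (g x)) \<circ> (\<lambda>(g, y). g(x := y))) py"
      using insert.hyps by (simp add: py)
  qed
  then show ?case using insert.hyps
    by (simp add: pi has_sum_reindex[OF inj])
qed

lemma geom_has_sum:
  fixes w :: "'a::{real_normed_field,banach}"
  assumes "norm w < 1"
  shows "((\<lambda>n. w ^ n) has_sum (w / (1 - w))) {1..}"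
proof -
  have "(\<lambda>n. w ^ n) sums (1 / (1 - w))" by (rule geometric_sums) fact
  hence "(\<lambda>n. w * w ^ n) sums (w * (1 / (1 - w)))" by (rule sums_mult)
  hence s2: "(\<lambda>n. w ^ Suc n) sums (w / (1 - w))" by simp
  have "summable (\<lambda>n. norm w * norm w ^ n)"
    by (rule summable_mult) (rule summable_geometric, simp add: assms)
  hence "summable (\<lambda>n. norm (w ^ Suc n))" by (simp add: norm_power norm_mult)
  hence h: "((\<lambda>n. w ^ Suc n) has_sum (w / (1 - w))) UNIV"
    by (rule norm_summable_imp_has_sum[OF _ s2])
  have r: "range Suc = {1::nat..}"
    by (force simp: image_iff Suc_le_eq gr0_conv_Suc)
  have "((\<lambda>n. w ^ n) has_sum w / (1 - w)) (range Suc) \<longleftrightarrow> (((\<lambda>n. w ^ n) \<circ> Suc) has_sum w / (1 - w)) UNIV"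
    by (rule has_sum_reindex) simp
  also have "((\<lambda>n. w ^ n) \<circ> Suc) = (\<lambda>n. w ^ Suc n)" by (simp add: o_def)
  finally show ?thesis using h r by simp
qed

definition cc :: "nat \<Rightarrow> nat \<Rightarrow> nat" where "cc k t = 2 * (k - 1 - t) + 1"

lemma WW_power: "z ^ WW k i = (\<Prod>t<k. (z ^ cc k t) ^ i t)"
  unfolding WW_def power_sum cc_def by (simp only: power_mult)

lemma sum_odd: "(\<Sum>s<k. 2 * s + 1) = (k::nat)^2"
  by (induction k) (auto simp: power2_eq_square)

lemma prodval:
  fixes z :: "'a::field"
  shows "(\<Prod>t<k. z ^ cc k t / (1 - z ^ cc k t))
       = z ^ (k^2) / (\<Prod>s<k. (1 - z ^ (2 * s + 1)))"
proof -
  have "(\<Prod>t<k. z ^ cc k t / (1 - z ^ cc k t))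
      = (\<Prod>t<k. (\<lambda>s. z ^ (2 * s + 1) / (1 - z ^ (2 * s + 1))) (k - Suc t))"
    by (simp add: cc_def)
  also have "\<dots> = (\<Prod>s<k. z ^ (2 * s + 1) / (1 - z ^ (2 * s + 1)))"
    by (rule prod.nat_diff_reindex)
  also have "\<dots> = (\<Prod>s<k. z ^ (2 * s + 1)) / (\<Prod>s<k. (1 - z ^ (2 * s + 1)))"
    by (rule prod_dividef)
  also have "(\<Prod>s<k. z ^ (2 * s + 1)) = z ^ (k^2)"
    by (simp only: power_sum[symmetric] sum_odd)
  finally show ?thesis .
qed

lemma qpoch_eq: "qpoch z (z^2) k = (\<Prod>s<k. (1 - z ^ (2 * s + 1)))"
  unfolding qpoch_def by (intro prod.cong refl) (simp add: power_mult[symmetric])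

lemma pow_lt1:
  fixes r :: real assumes "0 \<le> r" "r < 1" shows "r ^ (2 * m + 1) < 1"
proof -
  have "r ^ (2 * m + 1) \<le> r ^ 1" by (rule power_decreasing) (use assms in auto)
  thus ?thesis using assms by simp
qed

lemma realk:
  fixes r :: real
  assumes "0 \<le> r" "r < 1"
  shows "((\<lambda>i. r ^ WW k i) has_sum (r ^ (k^2) / (\<Prod>s<k. (1 - r ^ (2 * s + 1))))) (TT k)"
proof -
  have lt: "r ^ cc k t < 1" for t unfolding cc_def by (rule pow_lt1) fact+
  have ge: "r ^ cc k t \<ge> 0" for t using assms by simp
  have "((\<lambda>g. \<Prod>t\<in>{..<k}. (r ^ cc k t) ^ g t) has_sum
     (\<Prod>t\<in>{..<k}. r ^ cc k t / (1 - r ^ cc k t))) (PiE {..<k} (\<lambda>_. {1..}))"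
  proof (rule has_sum_prod_PiE_nonneg)
    show "0 \<le> (r ^ cc k t) ^ y" for t y using ge by (rule zero_le_power)
    show "((^) (r ^ cc k t) has_sum r ^ cc k t / (1 - r ^ cc k t)) {1..}" for t
      by (rule geom_has_sum) (use lt ge in simp)
  qed simp
  thus ?thesis by (simp add: WW_power prodval TT_def)
qed

lemma complexk:
  fixes z :: complex
  assumes "norm z < 1"
  shows "((\<lambda>i. z ^ WW k i) has_sum (z ^ (k^2) / qpoch z (z^2) k)) (TT k)"
proof -
  define f where "f t n = (z ^ cc k t) ^ n" for t n
  have nz: "norm (z ^ cc k t) < 1" for t
    using pow_lt1[of "norm z" "k - 1 - t"] assms unfolding cc_def by (simp only: norm_power norm_ge_zero)
  have gs: "(f t has_sum (z ^ cc k t / (1 - z ^ cc k t))) {1..}" for t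
    unfolding f_def by (rule geom_has_sum) (rule nz)
  have abs: "f t abs_summable_on {1..}" for t
  proof -
    have "((\<lambda>n. norm (z ^ cc k t) ^ n) has_sum (norm (z ^ cc k t) / (1 - norm (z ^ cc k t)))) {1..}"
      by (rule geom_has_sum) (use nz in simp)
    thus ?thesis unfolding f_def by (auto simp: summable_on_def norm_power)
  qed
  have "infsum (\<lambda>g. \<Prod>t\<in>{..<k}. f t (g t)) (PiE {..<k} (\<lambda>_. {1..}))
     = (\<Prod>t\<in>{..<k}. infsum (f t) {1..})"
    by (rule infsum_prod_PiE_abs) (use abs in auto)
  also have "\<dots> = (\<Prod>t<k. z ^ cc k t / (1 - z ^ cc k t))"
    by (intro prod.cong refl infsumI gs)
  also have "\<dots> = z ^ (k^2) / (\<Prod>s<k. (1 - z ^ (2 * s + 1)))" by (rule prodval)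
  also have "\<dots> = z ^ (k^2) / qpoch z (z^2) k" by (simp only: qpoch_eq)
  finally have val: "infsum (\<lambda>i. z ^ WW k i) (TT k) = z ^ (k^2) / qpoch z (z^2) k"
    by (simp add: f_def WW_power TT_def)
  have "(\<lambda>i. norm (z ^ WW k i)) summable_on TT k"
    using realk[of "norm z" k] assms by (auto simp: summable_on_def norm_power)
  hence "(\<lambda>i. z ^ WW k i) summable_on TT k"
    by (simp add: summable_on_iff_abs_summable_on_complex)
  from has_sum_infsum[OF this] show ?thesis by (simp add: val)
qed

lemma summ_a:
  fixes r :: real
  assumes "0 \<le> r" "r < 1"
  shows "summable (\<lambda>k. r ^ (k^2) / (\<Prod>s<k. (1 - r ^ (2 * s + 1))))"
proof -
  define P where "P k = (\<Prod>s<k. (1 - r ^ (2 * s + 1)))" for k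
  have Ppos: "P k > 0" for k
    unfolding P_def by (intro prod_pos) (use pow_lt1 assms in auto)
  have "(\<lambda>n. r ^ n) \<longlonglongrightarrow> 0" by (rule LIMSEQ_power_zero) (use assms in simp)
  then obtain N where N: "\<And>n. n \<ge> N \<Longrightarrow> r ^ n \<le> 1/3"
    by (metis (no_types, lifting) LIMSEQ_D abs_of_nonneg assms(1) order.strict_implies_order
        zero_le_power divide_pos_pos zero_less_numeral zero_less_one real_norm_def diff_zero)
  show ?thesis
  proof (rule summable_ratio_test[of "1/2" N])
    fix n assume "n \<ge> N"
    define x where "x = r ^ (2 * n + 1)"
    have x0: "x \<ge> 0" using assms by (simp add: x_def)
    have x3: "x \<le> 1/3" unfolding x_def by (rule N) (use \<open>n \<ge> N\<close> in simp)
    have sq: "(Suc n)^2 = n^2 + (2*n+1)" by (simp add: power2_eq_square)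
    have e1: "r ^ (Suc n)^2 = r ^ (n^2) * x" unfolding sq x_def by (rule power_add)
    have e2: "P (Suc n) = P n * (1 - x)" by (simp add: P_def x_def)
    have x1: "1 - x \<noteq> 0" using x3 by simp
    have eq: "r ^ (Suc n)^2 / P (Suc n) = (r ^ (n^2) / P n) * (x / (1 - x))"
      unfolding e1 e2 using Ppos[of n] x1 by (simp add: field_simps)
    have ratio: "x / (1 - x) \<le> 1/2" using x0 x3 by (simp add: field_simps)
    have nn: "r ^ (n^2) / P n \<ge> 0" using Ppos[of n] assms by simp
    have A: "r ^ (Suc n)^2 / P (Suc n) \<le> 1/2 * (r ^ (n^2) / P n)"
      using eq mult_left_mono[OF ratio nn] by (simp add: mult.commute)
    have B: "0 \<le> r ^ (Suc n)^2 / P (Suc n)" using Ppos[of "Suc n"] assms by simp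
    show "norm (r ^ (Suc n)^2 / (\<Prod>s<Suc n. (1 - r ^ (2 * s + 1))))
        \<le> 1/2 * norm (r ^ (n^2) / (\<Prod>s<n. (1 - r ^ (2 * s + 1))))"
      unfolding P_def[symmetric] real_norm_def abs_of_nonneg[OF B] abs_of_nonneg[OF nn] by (rule A)
  qed simp
qed

lemma WW_bounds:
  assumes "i \<in> TT k"
  shows "k \<le> WW k i" "t < k \<Longrightarrow> i t \<le> WW k i"
proof -
  have pos: "\<And>t. t < k \<Longrightarrow> 1 \<le> i t" using assms by (auto simp: TT_def PiE_def Pi_def)
  have s1: "(\<Sum>t<k. i t) \<le> WW k i" unfolding WW_def by (rule sum_mono) simp
  have "(\<Sum>t<k. (1::nat)) \<le> (\<Sum>t<k. i t)" by (rule sum_mono) (use pos in auto)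
  then show "k \<le> WW k i" using s1 by simp
  show "t < k \<Longrightarrow> i t \<le> WW k i"
    using member_le_sum[of t "{..<k}" i] s1 by auto
qed

theorem theorem27:
  fixes q :: complex
  assumes "norm q < 1"
  shows "summable (\<lambda>n. q ^ (n\<^sup>2) / qpoch q (q\<^sup>2) n)
     \<and> (\<lambda>N. of_nat (psi3_count N) * q ^ N) sums psi3 q"
proof -
  define r where "r = norm q"
  have r0: "0 \<le> r" and r1: "r < 1" using assms by (auto simp: r_def)
  define S where "S = Sigma (UNIV::nat set) TT"
  define F where "F = (\<lambda>x::nat \<times> (nat \<Rightarrow> nat). q ^ WW (fst x) (snd x))"
  define a where "a k = r ^ (k^2) / (\<Prod>s<k. (1 - r ^ (2 * s + 1)))" for k
  have hk: "((\<lambda>i. norm (q ^ WW k i)) has_sum (a k)) (TT k)" for k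
    unfolding norm_power a_def r_def[symmetric] by (rule realk[OF r0 r1])
  have anonn: "0 \<le> a k" for k
    unfolding a_def using r0 pow_lt1[OF r0 r1] by (intro divide_nonneg_pos prod_pos) auto
  have sa: "summable a" unfolding a_def by (rule summ_a[OF r0 r1])
  have absF: "F abs_summable_on S"
    unfolding S_def abs_summable_on_Sigma_iff
  proof (intro conjI ballI)
    show "(\<lambda>i. F (k, i)) abs_summable_on TT k" for k
      using hk[of k] by (auto simp: F_def summable_on_def)
    have eqa: "infsum (\<lambda>y. norm (F (k, y))) (TT k) = a k" for k
      using hk[of k] by (simp add: F_def infsumI)
    have "(\<lambda>k. norm (a k)) summable_on UNIV"
    proof (rule norm_summable_imp_summable_on)
      show "summable (\<lambda>k. norm (norm (a k)))" using sa anonn by simp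
    qed
    then show "(\<lambda>k. infsum (\<lambda>y. norm (F (k, y))) (TT k)) abs_summable_on UNIV" by (simp add: eqa)
  qed
  have sF: "F summable_on S" using absF summable_on_iff_abs_summable_on_complex by blast
  define V where "V = infsum F S"
  have hF: "(F has_sum V) S" using sF by (simp add: V_def)
  have hF': "(F has_sum V) (Sigma UNIV TT)" using hF by (simp add: S_def)
  have inner: "((\<lambda>i. F (k, i)) has_sum (q ^ (k^2) / qpoch q (q^2) k)) (TT k)" for k
    using complexk[OF assms, of k] by (simp add: F_def)
  have outer: "((\<lambda>k. q ^ (k^2) / qpoch q (q^2) k) has_sum V) UNIV"
    by (rule has_sum_Sigma'[OF hF']) (rule inner)
  have s1: "(\<lambda>k. q ^ (k^2) / qpoch q (q^2) k) sums V" by (rule has_sum_imp_sums[OF outer])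
  have psiV: "psi3 q = V" unfolding psi3_def using s1 by (simp add: sums_unique[symmetric])
  define G where "G N = {x \<in> S. WW (fst x) (snd x) = N}" for N
  define h where "h = (\<lambda>x::nat \<times> (nat \<Rightarrow> nat). (WW (fst x) (snd x), x))"
  have injh: "inj_on h S" by (auto simp: h_def inj_on_def)
  have himg: "h ` S = Sigma UNIV G" by (auto simp: h_def G_def image_iff)
  define g where "g = (\<lambda>y::nat \<times> (nat \<times> (nat \<Rightarrow> nat)). F (snd y))"
  have gh: "g \<circ> h = F" by (auto simp: g_def h_def)
  have "(g has_sum V) (h ` S)" using hF by (simp add: has_sum_reindex[OF injh] gh)
  hence hS: "(g has_sum V) (Sigma UNIV G)" using himg by simp
  have finG: "finite (G N)" for N
  proof (rule finite_subset)
    show "G N \<subseteq> Sigma {..N} (\<lambda>k. PiE {..<k} (\<lambda>_. {1..N}))"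
    proof
      fix x assume x: "x \<in> G N"
      obtain k i where xki: "x = (k, i)" by force
      have iT: "i \<in> TT k" and w: "WW k i = N" using x by (auto simp: G_def S_def xki)
      have "k \<le> N" using WW_bounds(1)[OF iT] w by simp
      moreover have "i \<in> PiE {..<k} (\<lambda>_. {1..N})"
        using iT WW_bounds(2)[OF iT] w by (auto simp: TT_def PiE_def Pi_def)
      ultimately show "x \<in> Sigma {..N} (\<lambda>k. PiE {..<k} (\<lambda>_. {1..N}))" by (simp add: xki)
    qed
    show "finite (Sigma {..N} (\<lambda>k. PiE {..<k} (\<lambda>_. {1..N})))"
      by (intro finite_SigmaI finite_PiE) auto
  qed
  have innerG: "((\<lambda>x. g (N, x)) has_sum (of_nat (card (G N)) * q ^ N)) (G N)" for N
  proof (rule has_sum_finiteI[OF finG])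
    have "sum (\<lambda>x. g (N, x)) (G N) = sum (\<lambda>x. q ^ N) (G N)"
      by (rule sum.cong) (auto simp: g_def F_def G_def)
    thus "of_nat (card (G N)) * q ^ N = sum (\<lambda>x. g (N, x)) (G N)" by simp
  qed
  have out2: "((\<lambda>N. of_nat (card (G N)) * q ^ N) has_sum V) UNIV"
    by (rule has_sum_Sigma'[OF hS]) (rule innerG)
  have cardG: "card (G N) = psi3_count N" for N
  proof -
    define enc where "enc = (\<lambda>x::nat \<times> (nat \<Rightarrow> nat). mset (LL (fst x) (snd x)))"
    have "bij_betw enc (G N) {\<pi>. psi3_partition \<pi> \<and> pweight \<pi> = N}"
      unfolding bij_betw_def
    proof
      show "inj_on enc (G N)"
      proof (rule inj_onI)
        fix x y assume "x \<in> G N" "y \<in> G N" "enc x = enc y"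
        then show "x = y" using LL_inj[of "snd x" "fst x" "snd y" "fst y"]
          by (auto simp: G_def S_def enc_def intro: prod_eqI)
      qed
      show "enc ` G N = {\<pi>. psi3_partition \<pi> \<and> pweight \<pi> = N}"
      proof
        show "enc ` G N \<subseteq> {\<pi>. psi3_partition \<pi> \<and> pweight \<pi> = N}"
          using enc_good by (auto simp: G_def S_def enc_def)
        show "{\<pi>. psi3_partition \<pi> \<and> pweight \<pi> = N} \<subseteq> enc ` G N"
        proof
          fix \<pi> assume "\<pi> \<in> {\<pi>. psi3_partition \<pi> \<and> pweight \<pi> = N}"
          then have p: "psi3_partition \<pi>" "pweight \<pi> = N" by auto
          obtain k i where ki: "i \<in> TT k" "\<pi> = mset (LL k i)" using LL_surj[OF p(1)] by blast
          have "WW k i = N" using enc_good[OF ki(1)] p(2) ki(2) by simp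
          hence "(k, i) \<in> G N" using ki(1) by (simp add: G_def S_def)
          moreover have "\<pi> = enc (k, i)" using ki(2) by (simp add: enc_def)
          ultimately show "\<pi> \<in> enc ` G N" by blast
        qed
      qed
    qed
    thus ?thesis unfolding psi3_count_def by (rule bij_betw_same_card)
  qed
  have "(\<lambda>N. of_nat (psi3_count N) * q ^ N) sums V"
    using has_sum_imp_sums[OF out2] by (simp add: cardG)
  thus ?thesis using s1 psiV by (auto intro: sums_summable)
qed

end
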